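(* Let $P_1$ be the uniform distribution on $J_1=[0,\frac12]$, let $P_2$ be the uniform distribution on $J_2=[\frac34,1]$, and let $P=\frac34P_1+\frac14P_2$. For $n\ge 2$, let $\alpha_n$ be an optimal set of $n$-means for $P$. Then $\alpha_n\cap J_1\neq\emptyset$ and $\alpha_n\cap J_2\neq\emptyset$. Moreover, for $n\ge 2$, the Voronoi region (with respect to $\alpha_n$) of any point in $\alpha_n\cap J_1$ does not contain any point of $J_2$, and the Voronoi region of any point in $\alpha_n\cap J_2$ does not contain any point of $J_1$.
   Context: For a finite set $\alpha\subset\mathbb R$, $V(P;\alpha)=\int\min_{a\in\alpha}(x-a)^2\,dP(x)$; $V_n=\inf\{V(P;\alpha):\mathrm{card}(\alpha)\le n\}$; an optimal set of $n$-means is a set $\alpha$ with $\mathrm{card}(\alpha)\le n$ and $V(P;\alpha)=V_n$. The Voronoi region of $a\in\alpha$ is $\{x\in\mathbb R: |x-a|=\min_{b\in\alpha}|x-b|\}$. *)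

theory Defs
  imports "HOL-Analysis.Analysis"
begin

definition unif_dens :: "real \<Rightarrow> real \<Rightarrow> real \<Rightarrow> real" where
  "unif_dens a b x = indicator {a..b} x / (b - a)"

definition J1 :: "real set" where "J1 = {0..1/2}"
definition J2 :: "real set" where "J2 = {3/4..1}"

(* P = 3/4 P1 + 1/4 P2, with P1, P2 uniform on J1, J2; realized via the mixture density *)
definition P :: "real measure" where
  "P = density lborel (\<lambda>x. ennreal (3/4 * unif_dens 0 (1/2) x + 1/4 * unif_dens (3/4) 1 x))"

definition distortion :: "real measure \<Rightarrow> real set \<Rightarrow> real" where
  "distortion M \<alpha> = (\<integral>x. Min ((\<lambda>a. (x - a)^2) ` \<alpha>) \<partial>M)"

definition Vn :: "real measure \<Rightarrow> nat \<Rightarrow> real" where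
  "Vn M n = (INF \<alpha> \<in> {\<alpha>. finite \<alpha> \<and> \<alpha> \<noteq> {} \<and> card \<alpha> \<le> n}. distortion M \<alpha>)"

definition optimal_n_means :: "real measure \<Rightarrow> nat \<Rightarrow> real set \<Rightarrow> bool" where
  "optimal_n_means M n \<alpha> \<longleftrightarrow> finite \<alpha> \<and> \<alpha> \<noteq> {} \<and> card \<alpha> \<le> n \<and> distortion M \<alpha> = Vn M n"

definition voronoi :: "real set \<Rightarrow> real \<Rightarrow> real set" where
  "voronoi \<alpha> a = {x. \<bar>x - a\<bar> = Min ((\<lambda>b. \<bar>x - b\<bar>) ` \<alpha>)}"

end

theory Submission
  imports Defs
begin

definition fa :: "real set \<Rightarrow> real \<Rightarrow> real" where
  "fa A x = Min ((\<lambda>a. (x - a)^2) ` A)"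

lemma fa_insert: "finite F \<Longrightarrow> F \<noteq> {} \<Longrightarrow> fa (insert a F) x = min ((x-a)^2) (fa F x)"
  unfolding fa_def by (simp add: Min_insert)

lemma fa_cont: "finite A \<Longrightarrow> A \<noteq> {} \<Longrightarrow> continuous_on S (fa A)"
proof (induction A rule: finite_ne_induct)
  case (singleton x) then show ?case by (simp add: fa_def continuous_intros)
next
  case (insert x F) then show ?case
    by (simp add: fa_insert[OF insert(1,2)] continuous_intros)
qed

lemma fa_le: "finite A \<Longrightarrow> a \<in> A \<Longrightarrow> fa A x \<le> (x-a)^2"
  unfolding fa_def by (rule Min_le) auto

lemma fa_ge: "finite A \<Longrightarrow> A \<noteq> {} \<Longrightarrow> (\<And>a. a \<in> A \<Longrightarrow> L \<le> (x-a)^2) \<Longrightarrow> L \<le> fa A x"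
  unfolding fa_def by (subst Min_ge_iff) auto

lemma fa_nonneg: "finite A \<Longrightarrow> A \<noteq> {} \<Longrightarrow> 0 \<le> fa A x"
  by (rule fa_ge) auto

lemma fa_pos: "finite A \<Longrightarrow> A \<noteq> {} \<Longrightarrow> x \<notin> A \<Longrightarrow> 0 < fa A x"
  unfolding fa_def by (subst Min_gr_iff) auto

definition cost :: "real set \<Rightarrow> real" where
  "cost A = 3/2 * integral {0..1/2} (fa A) + integral {3/4..1} (fa A)"

lemma cost_eq:
  assumes "finite A" "A \<noteq> {}"
  shows "distortion P A = cost A"
proof -
  let ?D = "\<lambda>x::real. 3/4 * unif_dens 0 (1/2) x + 1/4 * unif_dens (3/4) 1 x"
  have D: "?D x = 3/2 * indicator {0..1/2} x + indicator {3/4..1} x" for x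
    by (simp add: unif_dens_def)
  have c: "continuous_on UNIV (fa A)" using fa_cont assms by blast
  have m: "fa A \<in> borel_measurable lborel"
    using c by (simp add: borel_measurable_continuous_onI)
  have Dm: "?D \<in> borel_measurable lborel" unfolding D by measurable
  have "distortion P A = integral\<^sup>L P (fa A)"
    unfolding distortion_def fa_def ..
  also have "\<dots> = integral\<^sup>L lborel (\<lambda>x. ?D x *\<^sub>R fa A x)"
    unfolding P_def
    by (rule integral_density[OF m Dm]) (auto simp: unif_dens_def)
  also have "\<dots> = integral\<^sup>L lborel (\<lambda>x. 3/2 * (indicator {0..1/2} x *\<^sub>R fa A x)
        + indicator {3/4..1} x *\<^sub>R fa A x)"
    by (rule Bochner_Integration.integral_cong) (auto simp: unif_dens_def algebra_simps split: split_indicator)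
  also have "\<dots> = 3/2 * integral\<^sup>L lborel (\<lambda>x. indicator {0..1/2} x *\<^sub>R fa A x)
       + integral\<^sup>L lborel (\<lambda>x. indicator {3/4..1} x *\<^sub>R fa A x)"
    using borel_integrable_compact[of "{0..1/2::real}" "fa A"]
      borel_integrable_compact[of "{3/4..1::real}" "fa A"] c
  proof -
    have i1: "integrable lborel (\<lambda>x. indicator {0..1/2::real} x *\<^sub>R fa A x)"
      using borel_integrable_compact[of "{0..1/2::real}" "fa A"] c by (auto intro: continuous_on_subset)
    have i2: "integrable lborel (\<lambda>x. indicator {3/4..1::real} x *\<^sub>R fa A x)"
      using borel_integrable_compact[of "{3/4..1::real}" "fa A"] c by (auto intro: continuous_on_subset)
    show ?thesis using i1 i2 by simp
  qed
  also have "\<dots> = cost A"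
    unfolding cost_def
    using set_borel_integral_eq_integral(2)[of "{0..1/2::real}" "fa A"]
      set_borel_integral_eq_integral(2)[of "{3/4..1::real}" "fa A"]
      borel_integrable_compact[of "{0..1/2::real}" "fa A"]
      borel_integrable_compact[of "{3/4..1::real}" "fa A"] c
      continuous_on_subset[OF c, of "{0..1/2}"] continuous_on_subset[OF c, of "{3/4..1}"]
    by (auto simp: set_integrable_def set_lebesgue_integral_def)
  finally show ?thesis .
qed

lemma int_pos_gen:
  fixes g :: "real \<Rightarrow> real"
  assumes uv: "u < v" and c: "continuous_on {u..v} g" and nn: "\<And>x. x \<in> {u..v} \<Longrightarrow> 0 \<le> g x"
    and x0: "x0 \<in> {u..v}" and gp: "g x0 > 0"
  shows "integral {u..v} g > 0"
proof -
  obtain d where d: "d > 0" and dd: "\<And>x. x \<in> {u..v} \<Longrightarrow> dist x x0 < d \<Longrightarrow> dist (g x) (g x0) < g x0 / 2"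
    using c x0 gp unfolding continuous_on_iff by (metis half_gt_zero)
  define p where "p = max u (x0 - d/2)"
  define q where "q = min v (x0 + d/2)"
  have pq: "p < q" using uv d x0 by (auto simp: p_def q_def)
  have sub: "{p..q} \<subseteq> {u..v}" by (auto simp: p_def q_def)
  have lb: "g x0 / 2 \<le> g x" if "x \<in> {p..q}" for x
  proof -
    have "x \<in> {u..v}" using sub that by auto
    moreover have "dist x x0 < d" using that d by (auto simp: p_def q_def dist_real_def)
    ultimately have "dist (g x) (g x0) < g x0 / 2" by (rule dd)
    then have "\<bar>g x - g x0\<bar> < g x0 / 2" by (simp add: dist_real_def)
    then show ?thesis by linarith
  qed
  have "0 < (q - p) * (g x0 / 2)" using pq gp by simp
  also have "\<dots> = integral {p..q} (\<lambda>x. g x0 / 2)" using pq by simp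
  also have "\<dots> \<le> integral {p..q} g"
  proof -
    have i: "g integrable_on {p..q}" by (rule integrable_continuous_interval) (rule continuous_on_subset[OF c sub])
    have i2: "(\<lambda>x. g x0 / 2) integrable_on {p..q}" by (rule integrable_continuous_interval) (rule continuous_on_const)
    show ?thesis by (rule integral_le[OF i2 i lb])
  qed
  also have "\<dots> \<le> integral {u..v} g"
    using sub by (intro integral_subset_le) (auto intro!: integrable_continuous_interval continuous_on_subset[OF c sub] c nn)
  finally show ?thesis .
qed

lemma int_sq:
  fixes u v c :: real
  assumes "u \<le> v"
  shows "integral {u..v} (\<lambda>x. (x-c)^2) = ((v-c)^3 - (u-c)^3)/3"
proof -
  have "((\<lambda>x. (x-c)^2) has_integral ((\<lambda>x. (x-c)^3/3) v - (\<lambda>x. (x-c)^3/3) u)) {u..v}"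
    apply (rule fundamental_theorem_of_calculus[OF assms])
    apply (auto simp: has_real_derivative_iff_has_vector_derivative[symmetric] intro!: derivative_eq_intros)
    done
  then show ?thesis by (simp add: integral_unique diff_divide_distrib)
qed

lemma fa_int: "finite A \<Longrightarrow> A \<noteq> {} \<Longrightarrow> fa A integrable_on {u..v}"
  by (rule integrable_continuous_interval) (rule fa_cont)

lemma int_le_sq:
  assumes "finite A" "A \<noteq> {}" "u \<le> v" "\<And>x. x \<in> {u..v} \<Longrightarrow> fa A x \<le> (x-c)^2"
  shows "integral {u..v} (fa A) \<le> ((v-c)^3 - (u-c)^3)/3"
proof -
  have "integral {u..v} (fa A) \<le> integral {u..v} (\<lambda>x. (x-c)^2)"
    by (rule integral_le) (auto intro!: fa_int[OF assms(1,2)] assms(4) integrable_continuous_interval continuous_intros)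
  then show ?thesis using int_sq[OF assms(3)] by simp
qed

lemma int_ge_sq:
  assumes "finite A" "A \<noteq> {}" "u \<le> v" "\<And>x. x \<in> {u..v} \<Longrightarrow> (x-c)^2 \<le> fa A x"
  shows "((v-c)^3 - (u-c)^3)/3 \<le> integral {u..v} (fa A)"
proof -
  have "integral {u..v} (\<lambda>x. (x-c)^2) \<le> integral {u..v} (fa A)"
    by (rule integral_le) (auto intro!: fa_int[OF assms(1,2)] assms(4) integrable_continuous_interval continuous_intros)
  then show ?thesis using int_sq[OF assms(3)] by simp
qed

lemma int_eq_sq:
  assumes "finite A" "A \<noteq> {}" "u \<le> v" "\<And>x. x \<in> {u..v} \<Longrightarrow> fa A x = (x-c)^2"
  shows "integral {u..v} (fa A) = ((v-c)^3 - (u-c)^3)/3"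
  using int_le_sq[OF assms(1-3)] int_ge_sq[OF assms(1-3)] assms(4) by force

lemma int_split:
  assumes "finite A" "A \<noteq> {}" "u \<le> w" "w \<le> v"
  shows "integral {u..v} (fa A) = integral {u..w} (fa A) + integral {w..v} (fa A)"
  using Henstock_Kurzweil_Integration.integral_combine[OF assms(3,4) fa_int[OF assms(1,2)]] by simp

lemma int_nonneg: "finite A \<Longrightarrow> A \<noteq> {} \<Longrightarrow> 0 \<le> integral {u..v} (fa A)"
  by (rule integral_nonneg) (auto intro: fa_int fa_nonneg)

lemma int_posA: "finite A \<Longrightarrow> A \<noteq> {} \<Longrightarrow> u < v \<Longrightarrow> 0 < integral {u..v} (fa A)"
proof -
  assume a: "finite A" "A \<noteq> {}" "u < v"
  have "infinite {u..v}" using a(3) by simp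
  then obtain x0 where "x0 \<in> {u..v}" "x0 \<notin> A"
    using a(1) by (meson finite_subset subsetI)
  then show ?thesis
    using a by (intro int_pos_gen[of u v _ x0]) (auto intro: fa_cont fa_nonneg fa_pos)
qed

lemma cost_nonneg: "finite A \<Longrightarrow> A \<noteq> {} \<Longrightarrow> 0 \<le> cost A"
  unfolding cost_def using int_nonneg[of A] by (simp add: add_nonneg_nonneg)

lemma cost_mono:
  assumes "finite A" "A \<noteq> {}" "finite B" "B \<noteq> {}"
    and le: "\<And>x. x \<in> {0..1/2} \<union> {3/4..1} \<Longrightarrow> fa B x \<le> fa A x"
  shows "cost B \<le> cost A"
proof -
  have "integral {0..1/2} (fa B) \<le> integral {0..1/2} (fa A)"
    by (rule integral_le) (auto intro: fa_int[OF assms(1,2)] fa_int[OF assms(3,4)] le)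
  moreover have "integral {3/4..1} (fa B) \<le> integral {3/4..1} (fa A)"
    by (rule integral_le) (auto intro: fa_int[OF assms(1,2)] fa_int[OF assms(3,4)] le)
  ultimately show ?thesis unfolding cost_def by simp
qed

lemma cost_strict:
  assumes "finite A" "A \<noteq> {}" "finite B" "B \<noteq> {}"
    and le: "\<And>x. x \<in> {0..1/2} \<union> {3/4..1} \<Longrightarrow> fa B x \<le> fa A x"
    and x0: "x0 \<in> {0..1/2} \<union> {3/4..1}" "fa B x0 < fa A x0"
  shows "cost B < cost A"
proof -
  have ci: "continuous_on S (\<lambda>x. fa A x - fa B x)" for S
    using assms by (auto intro!: continuous_intros fa_cont)
  have d1: "integral {0..1/2} (fa A) - integral {0..1/2} (fa B) = integral {0..1/2} (\<lambda>x. fa A x - fa B x)"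
    by (rule integral_diff[symmetric]) (auto intro: fa_int[OF assms(1,2)] fa_int[OF assms(3,4)])
  have d2: "integral {3/4..1} (fa A) - integral {3/4..1} (fa B) = integral {3/4..1} (\<lambda>x. fa A x - fa B x)"
    by (rule integral_diff[symmetric]) (auto intro: fa_int[OF assms(1,2)] fa_int[OF assms(3,4)])
  have n1: "0 \<le> integral {0..1/2} (\<lambda>x. fa A x - fa B x)"
    by (rule integral_nonneg) (auto intro: integrable_continuous_interval ci le)
  have n2: "0 \<le> integral {3/4..1} (\<lambda>x. fa A x - fa B x)"
    by (rule integral_nonneg) (auto intro: integrable_continuous_interval ci le)
  have "0 < integral {0..1/2} (\<lambda>x. fa A x - fa B x) \<or> 0 < integral {3/4..1} (\<lambda>x. fa A x - fa B x)"
  proof (cases "x0 \<in> {0..1/2}")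
    case True
    then show ?thesis using x0 by (intro disjI1 int_pos_gen[of _ _ _ x0]) (auto intro: ci le)
  next
    case False
    then have "x0 \<in> {3/4..1}" using x0 by auto
    then show ?thesis using x0 by (intro disjI2 int_pos_gen[of _ _ _ x0]) (auto intro: ci le)
  qed
  then show ?thesis unfolding cost_def using d1 d2 n1 n2 by linarith
qed

lemma opt_le:
  assumes "optimal_n_means P n A" "finite B" "B \<noteq> {}" "card B \<le> n"
  shows "cost A \<le> cost B"
proof -
  have A: "finite A" "A \<noteq> {}" "distortion P A = Vn P n" using assms(1) unfolding optimal_n_means_def by auto
  have "Vn P n \<le> distortion P B"
    unfolding Vn_def
  proof (rule cINF_lower)
    show "bdd_below (distortion P ` {\<alpha>. finite \<alpha> \<and> \<alpha> \<noteq> {} \<and> card \<alpha> \<le> n})"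
      by (rule bdd_belowI[of _ 0]) (clarsimp, metis cost_eq cost_nonneg empty_iff)
  qed (use assms in auto)
  then show ?thesis using A assms cost_eq by simp
qed

lemma add_pt:
  assumes opt: "optimal_n_means P n A" and B: "finite B" "B \<noteq> {}" "card B < n"
  shows "cost A < cost B"
proof -
  have "infinite {0..1/2::real}" by simp
  then obtain p where p: "p \<in> {0..1/2}" "p \<notin> B" using B(1) by (meson finite_subset subsetI)
  let ?C = "insert p B"
  have C: "finite ?C" "?C \<noteq> {}" "card ?C \<le> n" using B p by auto
  have "cost ?C < cost B"
  proof (rule cost_strict[OF B(1,2) C(1,2)])
    show "fa ?C x \<le> fa B x" for x using fa_insert[OF B(1,2)] by simp
    show "p \<in> {0..1/2} \<union> {3/4..1}" using p by auto
    show "fa ?C p < fa B p" using fa_insert[OF B(1,2), of p p] fa_pos[OF B(1,2) p(2)] by simp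
  qed
  moreover have "cost A \<le> cost ?C" by (rule opt_le[OF opt C])
  ultimately show ?thesis by simp
qed

lemma opt_basic:
  assumes "optimal_n_means P n A"
  shows "finite A" "A \<noteq> {}" "card A \<le> n"
  using assms unfolding optimal_n_means_def by auto

lemma card_eq:
  assumes opt: "optimal_n_means P n A" shows "card A = n"
proof (rule ccontr)
  assume "card A \<noteq> n"
  then have "card A < n" using opt_basic[OF opt] by simp
  then have "cost A < cost A" using add_pt[OF opt] opt_basic[OF opt] by blast
  then show False by simp
qed

lemma move:
  assumes opt: "optimal_n_means P n A" and p: "p \<in> A" and q: "q \<in> {0..1/2} \<union> {3/4..1}"
    and pq: "p \<noteq> q"
    and closer: "\<And>x. x \<in> {0..1/2} \<union> {3/4..1} \<Longrightarrow> (x-q)^2 \<le> (x-p)^2"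
  shows False
proof -
  note A = opt_basic[OF opt]
  let ?B = "insert q (A - {p})"
  have B: "finite ?B" "?B \<noteq> {}" by (auto simp: A)
  have cardB: "card ?B \<le> card A"
  proof -
    have "card ?B \<le> Suc (card (A - {p}))" by (rule card_insert_le_m1[THEN order.trans]) (auto simp: card_insert_if A)
    also have "\<dots> = card A" using A p by (simp add: card_Diff_singleton) (metis Suc_pred card_gt_0_iff empty_iff)
    finally show ?thesis .
  qed
  have le: "fa ?B x \<le> fa A x" if "x \<in> {0..1/2} \<union> {3/4..1}" for x
  proof (rule fa_ge[OF A(1,2)])
    fix a assume a: "a \<in> A"
    show "fa ?B x \<le> (x-a)^2"
    proof (cases "a = p")
      case True
      then show ?thesis using fa_le[OF B(1), of q x] closer[OF that] by simp
    next
      case False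
      then show ?thesis using fa_le[OF B(1), of a x] a by simp
    qed
  qed
  show False
  proof (cases "q \<in> A")
    case True
    then have "?B = A - {p}" using pq by auto
    then have "card ?B < n" using A p card_Diff1_less[of A p] by simp
    then have "cost A < cost ?B" using add_pt[OF opt B] by simp
    moreover have "cost ?B \<le> cost A" by (rule cost_mono[OF A(1,2) B le])
    ultimately show False by simp
  next
    case False
    have "cost ?B < cost A"
    proof (rule cost_strict[OF A(1,2) B le q])
      show "fa ?B q < fa A q" using fa_le[OF B(1), of q q] fa_pos[OF A(1,2) False] by simp
    qed
    moreover have "cost A \<le> cost ?B" by (rule opt_le[OF opt B]) (use cardB A in simp)
    ultimately show False by simp
  qed
qed

lemma opt_sub:
  assumes opt: "optimal_n_means P n A" shows "A \<subseteq> {0..1}"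
proof
  fix p assume p: "p \<in> A"
  show "p \<in> {0..1}"
  proof (rule ccontr)
    assume "p \<notin> {0..1}"
    then have "p < 0 \<or> p > 1" by auto
    then show False
    proof
      assume "p < 0"
      show False
      proof (rule move[OF opt p, of 0])
        fix x :: real assume "x \<in> {0..1/2} \<union> {3/4..1}"
        then have "0 \<le> x" by auto
        then show "(x-0)^2 \<le> (x-p)^2" using \<open>p < 0\<close> by (intro power_mono) auto
      qed (use \<open>p < 0\<close> in auto)
    next
      assume "p > 1"
      show False
      proof (rule move[OF opt p, of 1])
        fix x :: real assume "x \<in> {0..1/2} \<union> {3/4..1}"
        then have "x \<le> 1" by auto
        then have "(1-x)^2 \<le> (p-x)^2" using \<open>p > 1\<close> by (intro power_mono) auto
        then show "(x-1)^2 \<le> (x-p)^2" by (simp add: power2_commute)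
      qed (use \<open>p > 1\<close> in auto)
    qed
  qed
qed

lemma cost3: "cost {1/8, 3/8, 7/8} \<le> 1/192"
proof -
  let ?B = "{1/8, 3/8, 7/8::real}"
  have B: "finite ?B" "?B \<noteq> {}" by auto
  have "integral {0..1/4} (fa ?B) \<le> ((1/4-1/8)^3 - (0-1/8)^3)/3"
    by (rule int_le_sq[OF B]) (auto intro: fa_le)
  also have "\<dots> = 1/768" by (simp add: power3_eq_cube)
  finally have h1: "integral {0..1/4} (fa ?B) \<le> 1/768" .
  have "integral {1/4..1/2} (fa ?B) \<le> ((1/2-3/8)^3 - (1/4-3/8)^3)/3"
    by (rule int_le_sq[OF B]) (auto intro: fa_le)
  also have "\<dots> = 1/768" by (simp add: power3_eq_cube)
  finally have h2: "integral {1/4..1/2} (fa ?B) \<le> 1/768" .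
  have "integral {3/4..1} (fa ?B) \<le> ((1-7/8)^3 - (3/4-7/8)^3)/3"
    by (rule int_le_sq[OF B]) (auto intro: fa_le)
  also have "\<dots> = 1/768" by (simp add: power3_eq_cube)
  finally have h3: "integral {3/4..1} (fa ?B) \<le> 1/768" .
  have sp: "integral {0..1/2} (fa ?B) = integral {0..1/4} (fa ?B) + integral {1/4..1/2} (fa ?B)"
    by (rule int_split[OF B]) auto
  have ar: "3/2*(x+y)+z \<le> 1/192" if "x \<le> 1/768" "y \<le> 1/768" "z \<le> 1/768" for x y z :: real
    using that by (simp add: distrib_left)
  show ?thesis unfolding cost_def sp using ar[OF h1 h2 h3] .
qed

lemma cost2: "cost {1/4, 7/8} \<le> 13/768"
proof -
  let ?B = "{1/4, 7/8::real}"
  have B: "finite ?B" "?B \<noteq> {}" by auto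
  have "integral {0..1/2} (fa ?B) \<le> ((1/2-1/4)^3 - (0-1/4)^3)/3"
    by (rule int_le_sq[OF B]) (auto intro: fa_le)
  also have "\<dots> = 1/96" by (simp add: power3_eq_cube)
  finally have h1: "integral {0..1/2} (fa ?B) \<le> 1/96" .
  have "integral {3/4..1} (fa ?B) \<le> ((1-7/8)^3 - (3/4-7/8)^3)/3"
    by (rule int_le_sq[OF B]) (auto intro: fa_le)
  also have "\<dots> = 1/768" by (simp add: power3_eq_cube)
  finally have h3: "integral {3/4..1} (fa ?B) \<le> 1/768" .
  show ?thesis unfolding cost_def using h1 h3 by linarith
qed

lemma J1_nonempty_ge:
  assumes "finite A" "A \<noteq> {}" "\<forall>a\<in>A. a > 1/2"
  shows "cost A \<ge> 1/16"
proof -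
  have "((1/2-1/2)^3 - (0-1/2)^3)/3 \<le> integral {0..1/2} (fa A)"
  proof (rule int_ge_sq[OF assms(1,2)])
    fix x :: real assume x: "x \<in> {0..1/2}"
    show "(x - 1/2)^2 \<le> fa A x"
    proof (rule fa_ge[OF assms(1,2)])
      fix a assume "a \<in> A"
      then have "a > 1/2" using assms by auto
      then have "(1/2-x)^2 \<le> (a-x)^2" using x by (intro power_mono) auto
      then show "(x - 1/2)^2 \<le> (x-a)^2" by (simp add: power2_commute)
    qed
  qed simp
  then show ?thesis using int_nonneg[OF assms(1,2), of "3/4" 1] unfolding cost_def by (simp add: power3_eq_cube)
qed

lemma J2_lb:
  assumes "finite A" "A \<noteq> {}" "\<forall>a\<in>A. a < 3/4"
  shows "cost A > 1/192"
proof -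
  have "((1-3/4)^3 - (3/4-3/4)^3)/3 \<le> integral {3/4..1} (fa A)"
  proof (rule int_ge_sq[OF assms(1,2)])
    fix x :: real assume x: "x \<in> {3/4..1}"
    show "(x - 3/4)^2 \<le> fa A x"
    proof (rule fa_ge[OF assms(1,2)])
      fix a assume "a \<in> A"
      then have "a < 3/4" using assms by auto
      then show "(x - 3/4)^2 \<le> (x-a)^2" using x by (intro power_mono) auto
    qed
  qed simp
  then show ?thesis using int_posA[OF assms(1,2), of 0 "1/2"] unfolding cost_def by (simp add: power3_eq_cube)
qed

lemma vor3_lb:
  assumes "finite A" "A \<noteq> {}" "\<forall>b\<in>A. b \<le> 1/2 \<or> b \<ge> 1"
  shows "cost A > 1/192"
proof -
  have "((1-1)^3 - (3/4-1)^3)/3 \<le> integral {3/4..1} (fa A)"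
  proof (rule int_ge_sq[OF assms(1,2)])
    fix x :: real assume x: "x \<in> {3/4..1}"
    show "(x - 1)^2 \<le> fa A x"
    proof (rule fa_ge[OF assms(1,2)])
      fix a assume "a \<in> A"
      then have "a \<le> 1/2 \<or> a \<ge> 1" using assms by auto
      then show "(x - 1)^2 \<le> (x-a)^2"
      proof
        assume "a \<le> 1/2"
        then have "(1-x)^2 \<le> (x-a)^2" using x by (intro power_mono) auto
        then show ?thesis by (simp add: power2_commute)
      next
        assume "a \<ge> 1"
        then have "(1-x)^2 \<le> (a-x)^2" using x by (intro power_mono) auto
        then show ?thesis by (simp add: power2_commute)
      qed
    qed
  qed simp
  then show ?thesis using int_posA[OF assms(1,2), of 0 "1/2"] unfolding cost_def by (simp add: power3_eq_cube)
qed

lemma vor4_lb: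
  assumes "finite A" "A \<noteq> {}" "\<forall>b\<in>A. b \<le> 1/4 \<or> b \<ge> 3/4"
  shows "cost A \<ge> 1/128"
proof -
  have "((1/2-1/4)^3 - (1/4-1/4)^3)/3 \<le> integral {1/4..1/2} (fa A)"
  proof (rule int_ge_sq[OF assms(1,2)])
    fix x :: real assume x: "x \<in> {1/4..1/2}"
    show "(x - 1/4)^2 \<le> fa A x"
    proof (rule fa_ge[OF assms(1,2)])
      fix a assume "a \<in> A"
      then have "a \<le> 1/4 \<or> a \<ge> 3/4" using assms by auto
      then show "(x - 1/4)^2 \<le> (x-a)^2"
      proof
        assume "a \<le> 1/4"
        then show ?thesis using x by (intro power_mono) auto
      next
        assume "a \<ge> 3/4"
        then have "(x-1/4)^2 \<le> (a-x)^2" using x by (intro power_mono) auto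
        then show ?thesis by (simp add: power2_commute)
      qed
    qed
  qed simp
  moreover have "integral {0..1/2} (fa A) = integral {0..1/4} (fa A) + integral {1/4..1/2} (fa A)"
    by (rule int_split[OF assms(1,2)]) auto
  moreover have "((1/2-1/4)^3 - (1/4-1/4)^3)/3 = (1/192::real)" by (simp add: power3_eq_cube)
  ultimately show ?thesis using int_nonneg[OF assms(1,2), of 0 "1/4"] int_nonneg[OF assms(1,2), of "3/4" 1]
    unfolding cost_def by linarith
qed

definition Q :: "real \<Rightarrow> real \<Rightarrow> real \<Rightarrow> real" where "Q u v c = ((v-c)^3 - (u-c)^3)/3"
lemma Q_exp: "Q u v c = (v-u)*c^2 - (v^2-u^2)*c + (v^3-u^3)/3"
  unfolding Q_def by (simp add: power3_eq_cube power2_eq_square field_simps) 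
lemma quad_min:
  fixes M S t :: real
  assumes "M > 0" "\<And>s. M*t^2 - 2*S*t \<le> M* s^2 - 2*S* s"
  shows "M*t = S"
proof -
  have "M*t^2 - 2*S*t \<le> M*(S/M)^2 - 2*S*(S/M)" by (rule assms(2))
  also have "\<dots> = -(S^2/M)" using assms(1) by (simp add: power2_eq_square field_simps)
  finally have "M*(M*t^2 - 2*S*t) \<le> -(S^2)" using assms(1) by (simp add: field_simps)
  then have "(M*t - S)^2 \<le> 0" by (simp add: power2_eq_square algebra_simps)
  then show ?thesis by simp
qed
lemma qa1: "\<And>s. Q 0 m a \<le> Q 0 m s \<Longrightarrow> m*a^2 - 2*(m^2/2)*a \<le> m* s^2 - 2*(m^2/2)* s"
  by (simp add: Q_exp)
lemma qb1: "3/2*Q m (1/2) t + Q (3/4) 1 t = (1-3*m/2)*t^2 - 2*(13/32 - 3*m^2/4)*t + (3/2*Q m (1/2) 0 + Q (3/4) 1 0)"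
  by (simp add: Q_exp power2_eq_square field_simps)
lemma qa3: "3/2*Q 0 (1/2) t + Q (3/4) m t = m*t^2 - 2*(m^2/2 - 3/32)*t + (3/2*Q 0 (1/2) 0 + Q (3/4) m 0)"
  by (simp add: Q_exp power2_eq_square field_simps)
lemma qb3: "Q m 1 t = (1-m)*t^2 - 2*((1-m^2)/2)*t + Q m 1 0"
  by (simp add: Q_exp power2_eq_square field_simps)
lemma qa2: "3/2*Q 0 (1/2) t = 3/4*t^2 - 2*(3/16)*t + 3/2*Q 0 (1/2) 0"
  by (simp add: Q_exp power2_eq_square field_simps)
lemma qb2: "Q (3/4) 1 t = 1/4*t^2 - 2*(7/32)*t + Q (3/4) 1 0"
  by (simp add: Q_exp power2_eq_square field_simps)
lemma contr1: "(1-3*m/2)*(3*m/2) = 13/32 - 3*m^2/4 \<Longrightarrow> False" for m :: real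
proof -
  assume h: "(1-3*m/2)*(3*m/2) = 13/32 - 3*m^2/4"
  have iden: "48*(m-1/2)^2 + 1 = 32*((13/32 - 3*m^2/4) - (1-3*m/2)*(3*m/2))" by (simp add: power2_eq_square field_simps)
  have e: "(13/32 - 3*m^2/4) - (1-3*m/2)*(3*m/2) = 0" using h by linarith
  have "48*(m-1/2)^2 + 1 = 0" using iden unfolding e by simp
  moreover have "48*(m-1/2)^2 + 1 > 0" by (simp add: add_nonneg_pos)
  ultimately show False by simp
qed
lemma contr3: "m * ((3*m-1)/2) = m^2/2 - 3/32 \<Longrightarrow> False" for m :: real
proof -
  assume h: "m * ((3*m-1)/2) = m^2/2 - 3/32"
  have iden: "32*(m-1/4)^2 + 1 = 32*(m * ((3*m-1)/2) - (m^2/2 - 3/32))" by (simp add: power2_eq_square field_simps)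
  have e: "m * ((3*m-1)/2) - (m^2/2 - 3/32) = 0" using h by linarith
  have "32*(m-1/4)^2 + 1 = 0" using iden unfolding e by simp
  moreover have "32*(m-1/4)^2 + 1 > 0" by (simp add: add_nonneg_pos)
  ultimately show False by simp
qed




lemma quad_min2:
  fixes M S K t :: real and F :: "real \<Rightarrow> real"
  assumes "M > 0" "\<And>s. F t \<le> F s" "\<And>s. F s = M* s^2 - 2*S* s + K"
  shows "M*t = S"
proof (rule quad_min[OF assms(1)])
  fix s show "M*t^2 - 2*S*t \<le> M* s^2 - 2*S* s" using assms(2)[of s] assms(3)[of s] assms(3)[of t] by linarith
qed

lemma qa1e: "Q 0 m c = m*c^2 - 2*(m^2/2)*c + Q 0 m 0"
  by (simp add: Q_exp power2_eq_square field_simps)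

lemma fa2_le: "fa {s,t} x \<le> (x-s)^2" "fa {s,t} x \<le> (x-t)^2"
  by (auto intro: fa_le)

lemma fa2_eq:
  assumes "a < b"
  shows "x \<le> (a+b)/2 \<Longrightarrow> fa {a,b} x = (x-a)^2" "x \<ge> (a+b)/2 \<Longrightarrow> fa {a,b} x = (x-b)^2"
proof -
  have e: "fa {a,b} x = min ((x-a)^2) ((x-b)^2)"
    using fa_insert[of "{b}" a x] by (simp add: fa_def)
  have d: "(x-a)^2 - (x-b)^2 = (b-a)*(2*x-a-b)" by (simp add: power2_eq_square algebra_simps)
  show "x \<le> (a+b)/2 \<Longrightarrow> fa {a,b} x = (x-a)^2"
  proof -
    assume "x \<le> (a+b)/2"
    then have "(b-a)*(2*x-a-b) \<le> 0" using assms by (intro mult_nonneg_nonpos) auto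
    then show ?thesis using e d by simp
  qed
  show "x \<ge> (a+b)/2 \<Longrightarrow> fa {a,b} x = (x-b)^2"
  proof -
    assume "x \<ge> (a+b)/2"
    then have "(b-a)*(2*x-a-b) \<ge> 0" using assms by (intro mult_nonneg_nonneg) auto
    then show ?thesis using e d by simp
  qed
qed

lemma n2:
  assumes opt: "optimal_n_means P 2 A"
  shows "A = {1/4, 7/8}"
proof -
  note A = opt_basic[OF opt]
  have c2: "card A = 2" by (rule card_eq[OF opt])
  have sub: "A \<subseteq> {0..1}" by (rule opt_sub[OF opt])
  obtain a b where ab: "A = {a,b}" "a < b"
  proof -
    obtain x y where "A = {x,y}" "x \<noteq> y" using c2 by (auto simp: card_2_iff)
    then show ?thesis
    proof (cases "x < y")
      case False
      then have "y < x" using \<open>x \<noteq> y\<close> by simp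
      then show ?thesis using that[of y x] \<open>A = {x,y}\<close> by (simp add: insert_commute)
    qed (use that in auto)
  qed
  have a0: "0 \<le> a" and b1: "b \<le> 1" using sub ab by auto
  define m where "m = (a+b)/2"
  have m0: "0 < m" and m1: "m < 1" using a0 b1 ab(2) by (auto simp: m_def)
  have fin2: "finite {s,t::real}" "{s,t} \<noteq> {}" for s t by auto
  have optST: "cost A \<le> cost {s,t}" for s t
    by (rule opt_le[OF opt fin2]) (simp add: card_insert_if)
  have fL: "fa A x = (x-a)^2" if "x \<le> m" for x using fa2_eq(1)[OF ab(2)] that ab(1) m_def by simp
  have fR: "fa A x = (x-b)^2" if "x \<ge> m" for x using fa2_eq(2)[OF ab(2)] that ab(1) m_def by simp
  have fAne: "finite A" "A \<noteq> {}" using A by auto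
  consider "m < 1/2" | "1/2 \<le> m" "m \<le> 3/4" | "3/4 < m" by linarith
  then show ?thesis
  proof cases
    case 1
    have eqA: "cost A = 3/2*(Q 0 m a + Q m (1/2) b) + Q (3/4) 1 b"
    proof -
      have "integral {0..1/2} (fa A) = integral {0..m} (fa A) + integral {m..1/2} (fa A)"
        by (rule int_split[OF fAne]) (use m0 1 in auto)
      moreover have "integral {0..m} (fa A) = Q 0 m a"
        unfolding Q_def by (rule int_eq_sq[OF fAne]) (use m0 fL in auto)
      moreover have "integral {m..1/2} (fa A) = Q m (1/2) b"
        unfolding Q_def by (rule int_eq_sq[OF fAne]) (use 1 fR in auto)
      moreover have "integral {3/4..1} (fa A) = Q (3/4) 1 b"
        unfolding Q_def by (rule int_eq_sq[OF fAne]) (use 1 fR in auto)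
      ultimately show ?thesis unfolding cost_def by simp
    qed
    have leST: "cost {s,t} \<le> 3/2*(Q 0 m s + Q m (1/2) t) + Q (3/4) 1 t" for s t
    proof -
      have "integral {0..1/2} (fa {s,t}) = integral {0..m} (fa {s,t}) + integral {m..1/2} (fa {s,t})"
        by (rule int_split[OF fin2]) (use m0 1 in auto)
      moreover have "integral {0..m} (fa {s,t}) \<le> Q 0 m s"
        unfolding Q_def by (rule int_le_sq[OF fin2]) (use m0 fa2_le in auto)
      moreover have "integral {m..1/2} (fa {s,t}) \<le> Q m (1/2) t"
        unfolding Q_def by (rule int_le_sq[OF fin2]) (use 1 fa2_le in auto)
      moreover have "integral {3/4..1} (fa {s,t}) \<le> Q (3/4) 1 t"
        unfolding Q_def by (rule int_le_sq[OF fin2]) (use fa2_le in auto)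
      ultimately show ?thesis unfolding cost_def by (simp add: distrib_left)
    qed
    have key: "3/2*(Q 0 m a + Q m (1/2) b) + Q (3/4) 1 b \<le> 3/2*(Q 0 m s + Q m (1/2) t) + Q (3/4) 1 t" for s t
      using optST[of s t] leST[of s t] eqA by simp
    have "m*a = m^2/2"
    proof -
      have "m*a^2 - 2*(m^2/2)*a \<le> m* s^2 - 2*(m^2/2)* s" for s
        using key[of s b] qa1[of m a s] by (simp add: distrib_left)
      then show ?thesis using quad_min[OF m0] by blast
    qed
    then have aa: "a = m/2" using m0 by (simp add: power2_eq_square)
    have "(1-3*m/2)*b = 13/32 - 3*m^2/4"
    proof -
      have "(1-3*m/2)*b^2 - 2*(13/32 - 3*m^2/4)*b \<le> (1-3*m/2)* s^2 - 2*(13/32 - 3*m^2/4)* s" for s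
        using key[of a s] qb1[of m b] qb1[of m s] by (simp add: distrib_left)
      moreover have "1-3*m/2 > 0" using 1 by simp
      ultimately show ?thesis using quad_min by blast
    qed
    moreover have "b = 3*m/2" using aa m_def by simp
    ultimately have "(1-3*m/2)*(3*m/2) = 13/32 - 3*m^2/4" by simp
    then show ?thesis using contr1 by blast
  next
    case 2
    have eqA: "cost A = 3/2*Q 0 (1/2) a + Q (3/4) 1 b"
    proof -
      have "integral {0..1/2} (fa A) = Q 0 (1/2) a"
        unfolding Q_def by (rule int_eq_sq[OF fAne]) (use 2 fL in auto)
      moreover have "integral {3/4..1} (fa A) = Q (3/4) 1 b"
        unfolding Q_def by (rule int_eq_sq[OF fAne]) (use 2 fR in auto)
      ultimately show ?thesis unfolding cost_def by simp
    qed
    have leST: "cost {s,t} \<le> 3/2*Q 0 (1/2) s + Q (3/4) 1 t" for s t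
    proof -
      have "integral {0..1/2} (fa {s,t}) \<le> Q 0 (1/2) s"
        unfolding Q_def by (rule int_le_sq[OF fin2]) (use fa2_le in auto)
      moreover have "integral {3/4..1} (fa {s,t}) \<le> Q (3/4) 1 t"
        unfolding Q_def by (rule int_le_sq[OF fin2]) (use fa2_le in auto)
      ultimately show ?thesis unfolding cost_def by simp
    qed
    have key: "3/2*Q 0 (1/2) a + Q (3/4) 1 b \<le> 3/2*Q 0 (1/2) s + Q (3/4) 1 t" for s t
      using optST[of s t] leST[of s t] eqA by simp
    have "3/4*a = 3/16"
    proof -
      have "3/2*Q 0 (1/2) a \<le> 3/2*Q 0 (1/2) s" for s
        using key[of s b] by linarith
      then show ?thesis
        using quad_min2[where M="3/4" and F="\<lambda>s. 3/2*Q 0 (1/2) s" and K="3/2*Q 0 (1/2) 0" and S="3/16", OF _ _ qa2] by simp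
    qed
    moreover have "1/4*b = 7/32"
    proof -
      have "Q (3/4) 1 b \<le> Q (3/4) 1 s" for s
        using key[of a s] by linarith
      then show ?thesis
        using quad_min2[where M="1/4" and F="Q (3/4) 1" and K="Q (3/4) 1 0" and S="7/32", OF _ _ qb2] by simp
    qed
    ultimately have "a = 1/4" "b = 7/8" by linarith+
    then show ?thesis using ab(1) by blast
  next
    case 3
    have eqA: "cost A = 3/2*Q 0 (1/2) a + (Q (3/4) m a + Q m 1 b)"
    proof -
      have "integral {3/4..1} (fa A) = integral {3/4..m} (fa A) + integral {m..1} (fa A)"
        by (rule int_split[OF fAne]) (use m1 3 in auto)
      moreover have "integral {0..1/2} (fa A) = Q 0 (1/2) a"
        unfolding Q_def by (rule int_eq_sq[OF fAne]) (use 3 fL in auto)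
      moreover have "integral {3/4..m} (fa A) = Q (3/4) m a"
        unfolding Q_def by (rule int_eq_sq[OF fAne]) (use 3 fL in auto)
      moreover have "integral {m..1} (fa A) = Q m 1 b"
        unfolding Q_def by (rule int_eq_sq[OF fAne]) (use m1 fR in auto)
      ultimately show ?thesis unfolding cost_def by simp
    qed
    have leST: "cost {s,t} \<le> 3/2*Q 0 (1/2) s + (Q (3/4) m s + Q m 1 t)" for s t
    proof -
      have "integral {3/4..1} (fa {s,t}) = integral {3/4..m} (fa {s,t}) + integral {m..1} (fa {s,t})"
        by (rule int_split[OF fin2]) (use m1 3 in auto)
      moreover have "integral {0..1/2} (fa {s,t}) \<le> Q 0 (1/2) s"
        unfolding Q_def by (rule int_le_sq[OF fin2]) (use fa2_le in auto)
      moreover have "integral {3/4..m} (fa {s,t}) \<le> Q (3/4) m s"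
        unfolding Q_def by (rule int_le_sq[OF fin2]) (use 3 fa2_le in auto)
      moreover have "integral {m..1} (fa {s,t}) \<le> Q m 1 t"
        unfolding Q_def by (rule int_le_sq[OF fin2]) (use m1 fa2_le in auto)
      ultimately show ?thesis unfolding cost_def by simp
    qed
    have key: "3/2*Q 0 (1/2) a + (Q (3/4) m a + Q m 1 b) \<le> 3/2*Q 0 (1/2) s + (Q (3/4) m s + Q m 1 t)" for s t
      using optST[of s t] leST[of s t] eqA by simp
    have "(1-m)*b = (1-m^2)/2"
    proof -
      have "Q m 1 b \<le> Q m 1 s" for s
        using key[of a s] by linarith
      moreover have "1 - m > 0" using m1 by simp
      ultimately show ?thesis using quad_min2[of _ "Q m 1"] qb3 by blast
    qed
    then have "(1-m)*b = (1-m)*((1+m)/2)" by (simp add: power2_eq_square algebra_simps)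
    then have bb: "b = (1+m)/2" using m1 by simp
    have "m*a = m^2/2 - 3/32"
    proof -
      have "3/2*Q 0 (1/2) a + Q (3/4) m a \<le> 3/2*Q 0 (1/2) s + Q (3/4) m s" for s
        using key[of s b] by linarith
      then show ?thesis using quad_min2[OF m0, of "\<lambda>s. 3/2*Q 0 (1/2) s + Q (3/4) m s"] qa3 by blast
    qed
    moreover have "a = (3*m-1)/2" using bb m_def by (simp add: field_simps)
    ultimately have "m * ((3*m-1)/2) = m^2/2 - 3/32" by simp
    then show ?thesis using contr3 by blast
  qed
qed


lemma vor_le: "finite A \<Longrightarrow> y \<in> voronoi A a \<Longrightarrow> b \<in> A \<Longrightarrow> \<bar>y-a\<bar> \<le> \<bar>y-b\<bar>"
  unfolding voronoi_def by (auto intro: Min_le)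

theorem proposition3p7:
  fixes n :: nat and \<alpha> :: "real set"
  assumes "n \<ge> 2" and "optimal_n_means P n \<alpha>"
  shows "\<alpha> \<inter> J1 \<noteq> {} \<and> \<alpha> \<inter> J2 \<noteq> {}
    \<and> (\<forall>a \<in> \<alpha> \<inter> J1. voronoi \<alpha> a \<inter> J2 = {})
    \<and> (\<forall>a \<in> \<alpha> \<inter> J2. voronoi \<alpha> a \<inter> J1 = {})"
proof -
  note A = opt_basic[OF assms(2)]
  have sub: "\<alpha> \<subseteq> {0..1}" by (rule opt_sub[OF assms(2)])
  show ?thesis
  proof (cases "n = 2")
    case True
    then have e: "\<alpha> = {1/4, 7/8}" using n2 assms(2) by simp
    have v1: "voronoi \<alpha> (1/4) \<inter> J2 = {}"
    proof -
      have "x \<notin> voronoi \<alpha> (1/4)" if "x \<in> J2" for x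
      proof
        assume "x \<in> voronoi \<alpha> (1/4)"
        then have "\<bar>x - 1/4\<bar> \<le> \<bar>x - 7/8\<bar>" using vor_le[of \<alpha> x "1/4" "7/8"] e by simp
        then show False using that by (auto simp: J2_def abs_if split: if_splits)
      qed
      then show ?thesis by blast
    qed
    have v2: "voronoi \<alpha> (7/8) \<inter> J1 = {}"
    proof -
      have "x \<notin> voronoi \<alpha> (7/8)" if "x \<in> J1" for x
      proof
        assume "x \<in> voronoi \<alpha> (7/8)"
        then have "\<bar>x - 7/8\<bar> \<le> \<bar>x - 1/4\<bar>" using vor_le[of \<alpha> x "7/8" "1/4"] e by simp
        then show False using that by (auto simp: J1_def abs_if split: if_splits)
      qed
      then show ?thesis by blast
    qed
    have i1: "\<alpha> \<inter> J1 = {1/4}" using e by (auto simp: J1_def)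
    have i2: "\<alpha> \<inter> J2 = {7/8}" using e by (auto simp: J2_def)
    show ?thesis using v1 v2 unfolding i1 i2 by simp
  next
    case False
    then have n3: "n \<ge> 3" using assms(1) by simp
    have c3: "card {1/8, 3/8, 7/8::real} = 3" by simp
    have ub: "cost \<alpha> \<le> 1/192"
      using opt_le[OF assms(2), of "{1/8,3/8,7/8}"] cost3 n3 c3 by simp
    have g1: "\<alpha> \<inter> J1 \<noteq> {}"
    proof
      assume h: "\<alpha> \<inter> J1 = {}"
      have "\<forall>a\<in>\<alpha>. a > 1/2"
      proof
        fix a assume "a \<in> \<alpha>"
        then show "a > 1/2" using h sub by (force simp: J1_def)
      qed
      then have "cost \<alpha> \<ge> 1/16" using J1_nonempty_ge A by blast
      then show False using ub by simp
    qed
    have g2: "\<alpha> \<inter> J2 \<noteq> {}"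
    proof
      assume h: "\<alpha> \<inter> J2 = {}"
      have "\<forall>a\<in>\<alpha>. a < 3/4"
      proof
        fix a assume "a \<in> \<alpha>"
        then show "a < 3/4" using h sub by (force simp: J2_def)
      qed
      then have "cost \<alpha> > 1/192" using J2_lb A by blast
      then show False using ub by simp
    qed
    have g3: "\<forall>a \<in> \<alpha> \<inter> J1. voronoi \<alpha> a \<inter> J2 = {}"
    proof (intro ballI)
      fix a assume a: "a \<in> \<alpha> \<inter> J1"
      show "voronoi \<alpha> a \<inter> J2 = {}"
      proof (rule ccontr)
        assume "voronoi \<alpha> a \<inter> J2 \<noteq> {}"
        then obtain y where y: "y \<in> voronoi \<alpha> a" "y \<in> J2" by blast
        have "\<forall>b\<in>\<alpha>. b \<le> 1/2 \<or> b \<ge> 1"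
        proof
          fix b assume b: "b \<in> \<alpha>"
          have le: "\<bar>y-a\<bar> \<le> \<bar>y-b\<bar>" by (rule vor_le[OF A(1) y(1) b])
          show "b \<le> 1/2 \<or> b \<ge> 1"
          proof (rule ccontr)
            assume "\<not> (b \<le> 1/2 \<or> b \<ge> 1)"
            then have "1/2 < b" "b < 1" by auto
            moreover have "0 \<le> a" "a \<le> 1/2" using a by (auto simp: J1_def)
            moreover have "3/4 \<le> y" "y \<le> 1" using y by (auto simp: J2_def)
            ultimately show False using le by (auto simp: abs_if split: if_splits)
          qed
        qed
        then have "cost \<alpha> > 1/192" using vor3_lb A by blast
        then show False using ub by simp
      qed
    qed
    have g4: "\<forall>a \<in> \<alpha> \<inter> J2. voronoi \<alpha> a \<inter> J1 = {}"
    proof (intro ballI)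
      fix a assume a: "a \<in> \<alpha> \<inter> J2"
      show "voronoi \<alpha> a \<inter> J1 = {}"
      proof (rule ccontr)
        assume "voronoi \<alpha> a \<inter> J1 \<noteq> {}"
        then obtain y where y: "y \<in> voronoi \<alpha> a" "y \<in> J1" by blast
        have "\<forall>b\<in>\<alpha>. b \<le> 1/4 \<or> b \<ge> 3/4"
        proof
          fix b assume b: "b \<in> \<alpha>"
          have le: "\<bar>y-a\<bar> \<le> \<bar>y-b\<bar>" by (rule vor_le[OF A(1) y(1) b])
          show "b \<le> 1/4 \<or> b \<ge> 3/4"
          proof (rule ccontr)
            assume "\<not> (b \<le> 1/4 \<or> b \<ge> 3/4)"
            then have "1/4 < b" "b < 3/4" by auto
            moreover have "3/4 \<le> a" "a \<le> 1" using a by (auto simp: J2_def)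
            moreover have "0 \<le> y" "y \<le> 1/2" using y by (auto simp: J1_def)
            ultimately show False using le by (auto simp: abs_if split: if_splits)
          qed
        qed
        then have "cost \<alpha> \<ge> 1/128" using vor4_lb A by blast
        then show False using ub by simp
      qed
    qed
    show ?thesis using g1 g2 g3 g4 by blast
  qed
qed

end
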